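(* Let $F$ be any field and let $n,p$ be positive integers with $p>1$, $n\ge p$ and $p\mid n$. Then there exists an $(n,p)$ block invertible square matrix over $F$; that is, there exists an invertible $n\times n$ matrix $M$ over $F$ such that, when $M$ is partitioned into $(n/p)^2$ contiguous $p\times p$ blocks $B_{i,j}$ ($1\le i,j\le n/p$), every block $B_{i,j}$ is an invertible $p\times p$ matrix.
   Context: For positive integers $a,b,p$ with $p\mid a$ and $p\mid b$, an $a\times b$ matrix (with $a$ rows and $b$ columns) over $F$ is partitioned into $p\times p$ blocks $B_{i,j}$, where $B_{i,j}$ is the submatrix formed by rows $(i-1)p+1,\dots,ip$ and columns $(j-1)p+1,\dots,jp$. Such a matrix is called block invertible (with block size $p$) if every block $B_{i,j}$ is invertible. An $n\times n$ matrix is an $(n,p)$ block invertible square matrix if it is block invertible with block size $p$ and is itself invertible. *)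

theory Defs
  imports "Jordan_Normal_Form.Matrix"
begin

text \<open>The (i,j) p x p block of a matrix (0-based block indices):
  rows i*p .. i*p+p-1 and columns j*p .. j*p+p-1.\<close>
definition block :: "'a mat \<Rightarrow> nat \<Rightarrow> nat \<Rightarrow> nat \<Rightarrow> 'a mat" where
  "block M p i j = mat p p (\<lambda>(r, c). M $$ (i * p + r, j * p + c))"

definition block_invertible :: "nat \<Rightarrow> 'a::semiring_1 mat \<Rightarrow> bool" where
  "block_invertible p M \<longleftrightarrow> p dvd dim_row M \<and> p dvd dim_col M \<and>
     (\<forall>i < dim_row M div p. \<forall>j < dim_col M div p. invertible_mat (block M p i j))"

definition block_invertible_square :: "nat \<Rightarrow> nat \<Rightarrow> 'a::semiring_1 mat \<Rightarrow> bool" where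
  "block_invertible_square n p M \<longleftrightarrow> M \<in> carrier_mat n n \<and> block_invertible p M \<and> invertible_mat M"

end

theory Submission
  imports Defs "Jordan_Normal_Form.Determinant"
begin

lemma inv_of_ker:
  fixes A :: "'a::field mat"
  assumes A: "A \<in> carrier_mat n n"
    and ker: "\<And>v. v \<in> carrier_vec n \<Longrightarrow> A *\<^sub>v v = 0\<^sub>v n \<Longrightarrow> v = 0\<^sub>v n"
  shows "invertible_mat A"
proof -
  have "det A \<noteq> 0" using det_0_iff_vec_prod_zero_field[OF A] ker by blast
  from det_non_zero_imp_unit[OF A this, of "()"]
  obtain B where B: "B \<in> carrier_mat n n" "A * B = 1\<^sub>m n" "B * A = 1\<^sub>m n"
    unfolding Units_def ring_mat_def by auto
  show ?thesis unfolding invertible_mat_def inverts_mat_def square_mat.simps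
    using A B by auto
qed

definition Ef :: "nat \<Rightarrow> nat \<Rightarrow> nat \<Rightarrow> 'a::field" where
  "Ef p r c = (if Suc r < p then (if c = Suc r then 1 else 0)
     else (if c = 0 then 1 else if c = p - 1 then -1 else 0))"

lemma Ef_sum:
  assumes p: "p > 1" and r: "r < p"
  shows "(\<Sum>c<p. Ef p r c * w c) = (if Suc r < p then w (Suc r) else w 0 - w (p - 1))"
proof (cases "Suc r < p")
  case True
  have "(\<Sum>c<p. Ef p r c * w c) = (\<Sum>c<p. if c = Suc r then w c else 0)"
    by (rule sum.cong) (auto simp: Ef_def True)
  also have "\<dots> = w (Suc r)" using True by (simp add: sum.delta)
  finally show ?thesis using True by simp
next
  case False
  have "(\<Sum>c<p. Ef p r c * w c) = (\<Sum>c<p. (if c = 0 then w c else 0) + (if c = p - 1 then - w c else 0))"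
    by (rule sum.cong) (use p False in \<open>auto simp: Ef_def\<close>)
  also have "\<dots> = w 0 - w (p - 1)" using p by (simp add: sum.distrib sum.delta)
  finally show ?thesis using False by simp
qed

lemma E_ker0:
  fixes w :: "nat \<Rightarrow> 'a::field"
  assumes p: "p > 1" and h: "\<forall>r<p. (\<Sum>c<p. Ef p r c * w c) = 0"
  shows "\<forall>r<p. w r = 0"
proof -
  have a: "w (Suc r) = 0" if "Suc r < p" for r
    using h[rule_format, of r] Ef_sum[OF p, of r w] that by simp
  have "w (p - 1) = 0" using a[of "p - 2"] p by (simp add: Suc_diff_Suc numeral_2_eq_2)
  moreover have "w 0 - w (p - 1) = 0"
    using h[rule_format, of "p - 1"] Ef_sum[OF p, of "p - 1" w] p by simp
  ultimately have "w 0 = 0" by simp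
  then show ?thesis using a by (metis not0_implies_Suc)
qed

lemma E_ker1:
  fixes w :: "nat \<Rightarrow> 'a::field"
  assumes p: "p > 1" and h: "\<forall>r<p. (\<Sum>c<p. Ef p r c * w c) = w r"
  shows "\<forall>r<p. w r = 0"
proof -
  have a: "w (Suc r) = w r" if "Suc r < p" for r
    using h[rule_format, of r] Ef_sum[OF p, of r w] that by simp
  have b: "r < p \<Longrightarrow> w r = w 0" for r
    by (induction r) (auto simp: a)
  have "w 0 - w (p - 1) = w (p - 1)"
    using h[rule_format, of "p - 1"] Ef_sum[OF p, of "p - 1" w] p by simp
  moreover have "w (p - 1) = w 0" using b[of "p - 1"] p by simp
  ultimately have "w 0 - w 0 = w 0" by metis
  then have "w 0 = 0" by simp
  then show ?thesis using b by simp
qed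

definition Emat :: "nat \<Rightarrow> 'a::field mat" where
  "Emat p = mat p p (\<lambda>(r, c). Ef p r c)"

lemma Emat_inv: assumes p: "p > 1" shows "invertible_mat (Emat p :: 'a::field mat)"
proof (rule inv_of_ker[of _ p])
  show "Emat p \<in> carrier_mat p p" by (simp add: Emat_def)
  fix v :: "'a vec" assume v: "v \<in> carrier_vec p" and z: "Emat p *\<^sub>v v = 0\<^sub>v p"
  have "\<forall>r<p. (\<Sum>c<p. Ef p r c * v $ c) = 0"
  proof (intro allI impI)
    fix r assume r: "r < p"
    have "(Emat p *\<^sub>v v) $ r = 0" using z r by simp
    then show "(\<Sum>c<p. Ef p r c * v $ c) = 0"
      using r v by (simp add: Emat_def scalar_prod_def lessThan_atLeast0)
  qed
  from E_ker0[OF p this] show "v = 0\<^sub>v p" using v by (intro eq_vecI) auto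
qed

definition Mb :: "nat \<Rightarrow> nat \<Rightarrow> 'a::field mat" where
  "Mb n p = mat n n (\<lambda>(a, b). if b div p \<le> a div p then Ef p (a mod p) (b mod p)
      else (if a mod p = b mod p then 1 else 0))"

lemma sum_add_split: "(\<Sum>b<(m::nat) + (q::nat). f b) = (\<Sum>b<m. f b) + (\<Sum>c<q. f (m + c))"
  by (induction q) (auto simp: add.assoc)

lemma sum_blocks: "(\<Sum>b<(k::nat) * (p::nat). f b) = (\<Sum>j<k. \<Sum>c<p. f (j * p + c))"
proof (induction k)
  case (Suc k)
  have "(\<Sum>b<Suc k * p. f b) = (\<Sum>b<k * p + p. f b)" by (simp add: add.commute)
  also have "\<dots> = (\<Sum>b<k * p. f b) + (\<Sum>c<p. f (k * p + c))" by (rule sum_add_split)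
  finally show ?case using Suc by simp
qed simp

lemma block_Mb:
  assumes p: "p > 0" and i: "i < n div p" and j: "j < n div p"
  shows "block (Mb n p) p i j = (if j \<le> i then Emat p else 1\<^sub>m p)"
proof -
  have ir: "i * p + r < n" if "r < p" for r
  proof -
    have "i * p + r < Suc i * p" using that by simp
    also have "\<dots> \<le> n div p * p" using i by (intro mult_right_mono) auto
    also have "\<dots> \<le> n" by simp
    finally show ?thesis .
  qed
  have jr: "j * p + r < n" if "r < p" for r
  proof -
    have "j * p + r < Suc j * p" using that by simp
    also have "\<dots> \<le> n div p * p" using j by (intro mult_right_mono) auto
    also have "\<dots> \<le> n" by simp
    finally show ?thesis .
  qed
  show ?thesis
    by (rule eq_matI) (auto simp: block_def Mb_def Emat_def ir jr p)
qed

lemma Mb_ker: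
  fixes v :: "'a::field vec"
  assumes p: "p > 1" and dv: "p dvd n" and np: "n \<ge> p" and v: "v \<in> carrier_vec n"
    and z: "(Mb n p :: 'a mat) *\<^sub>v v = 0\<^sub>v n"
  shows "v = 0\<^sub>v n"
proof -
  define k where "k = n div p"
  have n: "n = k * p" using dv by (simp add: k_def)
  define x where "x j c = v $ (j * p + c)" for j c
  define G where "G i r j = (if j \<le> i then (\<Sum>c<p. Ef p r c * x j c) else x j r)" for i r j
  have lt: "j * p + c < n" if "j < k" "c < p" for j c
  proof -
    have "j * p + c < Suc j * p" using that by simp
    also have "\<dots> \<le> k * p" using that by (intro mult_right_mono) auto
    finally show ?thesis using n by simp
  qed
  have row: "(\<Sum>j<k. G i r j) = 0" if "i < k" "r < p" for i r
  proof -
    have "((Mb n p :: 'a mat) *\<^sub>v v) $ (i * p + r) = 0" using z lt[OF that] by simp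
    then have "(\<Sum>b<k * p. (Mb n p :: 'a mat) $$ (i * p + r, b) * v $ b) = 0"
      using lt[OF that] v n by (simp add: scalar_prod_def lessThan_atLeast0 Mb_def)
    then have "(\<Sum>j<k. \<Sum>c<p. (Mb n p :: 'a mat) $$ (i * p + r, j * p + c) * v $ (j * p + c)) = 0"
      by (simp add: sum_blocks)
    moreover have "(\<Sum>c<p. (Mb n p :: 'a mat) $$ (i * p + r, j * p + c) * v $ (j * p + c)) = G i r j"
      if j: "j < k" for j
    proof (cases "j \<le> i")
      case True
      have "(Mb n p :: 'a mat) $$ (i * p + r, j * p + c) * v $ (j * p + c) = Ef p r c * x j c"
        if c: "c < p" for c
      proof -
        have "i * p + r < n" "j * p + c < n" using lt \<open>i < k\<close> \<open>r < p\<close> j c by auto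
        moreover have "(i * p + r) div p = i" "(j * p + c) div p = j"
           "(i * p + r) mod p = r" "(j * p + c) mod p = c" using p c \<open>r < p\<close> by auto
        ultimately show ?thesis using True by (simp add: Mb_def x_def)
      qed
      then show ?thesis using True by (simp add: G_def)
    next
      case False
      have "(\<Sum>c<p. (Mb n p :: 'a mat) $$ (i * p + r, j * p + c) * v $ (j * p + c))
          = (\<Sum>c<p. if c = r then x j c else 0)"
        by (rule sum.cong) (use False lt j \<open>i < k\<close> \<open>r < p\<close> p in \<open>auto simp: Mb_def x_def\<close>)
      then show ?thesis using False \<open>r < p\<close> by (simp add: G_def sum.delta)
    qed
    ultimately show ?thesis by simp
  qed
  have x1: "\<forall>r<p. x i r = 0" if "0 < i" "i < k" for i
  proof -
    have "\<forall>r<p. (\<Sum>c<p. Ef p r c * x i c) = x i r"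
    proof (intro allI impI)
      fix r assume r: "r < p"
      have "(\<Sum>j<k. G i r j - G (i - 1) r j) = 0"
        using row[OF \<open>i < k\<close> r] row[of "i - 1" r] that r by (simp add: sum_subtractf)
      moreover have "(\<Sum>j<k. G i r j - G (i - 1) r j)
          = (\<Sum>j<k. if j = i then (\<Sum>c<p. Ef p r c * x i c) - x i r else 0)"
        by (rule sum.cong) (use that in \<open>auto simp: G_def\<close>)
      ultimately show "(\<Sum>c<p. Ef p r c * x i c) = x i r" using that by (simp add: sum.delta)
    qed
    then show ?thesis using E_ker1[OF p] by blast
  qed
  have x0: "\<forall>r<p. x 0 r = 0"
  proof -
    have k0: "0 < k" using p np n by (metis gr0I mult_is_0 not_one_less_zero le_zero_eq) 
    have "\<forall>r<p. (\<Sum>c<p. Ef p r c * x 0 c) = 0"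
    proof (intro allI impI)
      fix r assume r: "r < p"
      have "(\<Sum>j<k. G 0 r j) = (\<Sum>j<k. if j = 0 then (\<Sum>c<p. Ef p r c * x 0 c) else 0)"
        by (rule sum.cong) (use x1 r in \<open>auto simp: G_def\<close>)
      then show "(\<Sum>c<p. Ef p r c * x 0 c) = 0" using row[OF k0 r] k0 by (simp add: sum.delta)
    qed
    then show ?thesis using E_ker0[OF p] by blast
  qed
  show ?thesis
  proof (rule eq_vecI)
    fix b assume "b < dim_vec (0\<^sub>v n :: 'a vec)"
    then have b: "b < n" by simp
    have "b div p < k" using b n p by (simp add: less_mult_imp_div_less)
    moreover have "b mod p < p" using p by simp
    ultimately have "x (b div p) (b mod p) = 0" using x0 x1 by (cases "b div p = 0") auto
    then show "v $ b = 0\<^sub>v n $ b" using b by (simp add: x_def mult.commute)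
  qed (use v in simp)
qed

lemma one_inv: "invertible_mat (1\<^sub>m p :: 'a::field mat)"
  unfolding invertible_mat_def inverts_mat_def by (auto intro!: exI[of _ "1\<^sub>m p"])

theorem mainTheorem2:
  fixes n p :: nat
  assumes "p > 1" and "n \<ge> p" and "p dvd n"
  shows "\<exists>M :: 'a::field mat. block_invertible_square n p M"
proof -
  have car: "(Mb n p :: 'a mat) \<in> carrier_mat n n" by (simp add: Mb_def)
  have "invertible_mat (Mb n p :: 'a mat)"
    by (rule inv_of_ker[OF car]) (rule Mb_ker[OF assms(1) assms(3) assms(2)])
  moreover have "block_invertible p (Mb n p :: 'a mat)"
    unfolding block_invertible_def
  proof (intro conjI allI impI)
    fix i j assume i: "i < dim_row (Mb n p :: 'a mat) div p" and j: "j < dim_col (Mb n p :: 'a mat) div p"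
    have e: "block (Mb n p :: 'a mat) p i j = (if j \<le> i then Emat p else 1\<^sub>m p)"
      using block_Mb[of p i n j] i j car assms(1) by auto
    show "invertible_mat (block (Mb n p :: 'a mat) p i j)"
      unfolding e using Emat_inv[OF assms(1)] one_inv by auto
  qed (use car assms in auto)
  ultimately show ?thesis using car unfolding block_invertible_square_def by blast
qed

end
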